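(* Let $g>0$, $\ell>0$, $p_0<p_1<0$, $[\![\rho]\!]<0$ and a vorticity strength function $\gamma$ be given. If $\Gamma_{\mathrm{rel}}:[p_1,0]\to(0,\infty)$ satisfies the compatibility condition $$\partial_p\big(\Gamma_{\mathrm{rel}}(p)^2\big)=2\gamma(-p),\qquad \ell=\int_{p_1}^0\frac{dp}{\Gamma_{\mathrm{rel}}(p)},$$ then there exists a one-parameter family $\{(H(\cdot;\lambda),Q(\lambda)):\lambda>0\}$ of solutions to the laminar flow problem with $H_p>0$, each member having prescribed relative circulation $\Gamma_{\mathrm{rel}}$ (i.e. $H_p^{-1}=\Gamma_{\mathrm{rel}}$ on $[p_1,0]$). Explicitly $$H(p;\lambda)=\begin{cases}\displaystyle\int_{p_1}^p\frac{dr}{\Gamma_{\mathrm{rel}}(r)}+\frac{p_1-p_0}{\lambda}, & p_1<p<0,\\[2mm]\dfrac{p-p_0}{\lambda}, & p_0<p<p_1,\end{cases}\qquad Q(\lambda)=\frac{2g[\![\rho]\!](p_1-p_0)}{\lambda}+\Gamma_{\mathrm{rel}}(p_1)^2-\lambda^2 .$$ The depth of the fluid at parameter $\lambda$ is $d(\lambda)=H(p_1;\lambda)=\dfrac{p_1-p_0}{\lambda}$ and the width of the channel is $W(\lambda)=\ell+d(\lambda)$.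
   Context: Laminar flow problem: find $Q\in\mathbb R$ and $H\in C([p_0,0])$, $C^2$ on $[p_0,p_1]$ and on $[p_1,0]$, with $H_{pp}=0$ on $(p_0,p_1)$; $H_{pp}=-\gamma(-p)H_p^3$ on $(p_1,0)$; $[\![H_p^{-2}]\!]+2g[\![\rho]\!]H(p_1)-Q=0$; $H(0)=\ell+d(H)$ with $d(H)=H(p_1)$; $H(p_0)=0$. Here $[\![f]\!]=f(p_1^+)-f(p_1^-)$, $[\![\rho]\!]=\rho_{\mathrm{air}}-\rho_{\mathrm{water}}$, $g$ the gravitational constant, and $\gamma$ a given smooth real function (vorticity strength function of the air). *)

theory Defs
  imports "HOL-Analysis.Analysis"
begin

definition smooth_real :: "(real \<Rightarrow> real) \<Rightarrow> bool" where
  "smooth_real f \<longleftrightarrow> (\<exists>D :: nat \<Rightarrow> real \<Rightarrow> real. D 0 = f \<and>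
      (\<forall>n x. (D n has_real_derivative D (Suc n) x) (at x)))"

definition C2_with :: "real \<Rightarrow> real \<Rightarrow> (real \<Rightarrow> real) \<Rightarrow> (real \<Rightarrow> real) \<Rightarrow> (real \<Rightarrow> real) \<Rightarrow> bool" where
  "C2_with a b H D1 D2 \<longleftrightarrow>
     (\<forall>p\<in>{a..b}. (H has_real_derivative D1 p) (at p within {a..b}) \<and>
                 (D1 has_real_derivative D2 p) (at p within {a..b})) \<and>
     continuous_on {a..b} D2"

text \<open>The laminar flow problem. rho_jump stands for [[rho]] = rho_air - rho_water.
  Hl', Hl'' are the derivatives of H on [p0,p1], Hu', Hu'' those on [p1,0];
  [[H_p^{-2}]] = Hu'(p1)^{-2} - Hl'(p1)^{-2}.\<close>
definition laminar_solution_pos ::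
  "real \<Rightarrow> real \<Rightarrow> (real \<Rightarrow> real) \<Rightarrow> real \<Rightarrow> real \<Rightarrow> real \<Rightarrow> real \<Rightarrow> (real \<Rightarrow> real) \<Rightarrow>
   (real \<Rightarrow> real) \<Rightarrow> (real \<Rightarrow> real) \<Rightarrow> bool" where
  "laminar_solution_pos g rho_jump \<gamma> ell p0 p1 Q H Hl' Hu' \<longleftrightarrow>
     continuous_on {p0..0} H \<and>
     (\<exists>Hl'' Hu''.
        C2_with p0 p1 H Hl' Hl'' \<and> C2_with p1 0 H Hu' Hu'' \<and>
        (\<forall>p\<in>{p0<..<p1}. Hl'' p = 0) \<and>
        (\<forall>p\<in>{p1<..<0}. Hu'' p = - \<gamma> (-p) * (Hu' p) ^ 3)) \<and>
     (1 / (Hu' p1)\<^sup>2 - 1 / (Hl' p1)\<^sup>2) + 2 * g * rho_jump * H p1 - Q = 0 \<and>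
     H 0 = ell + H p1 \<and>
     H p0 = 0 \<and>
     (\<forall>p\<in>{p0..p1}. Hl' p > 0) \<and> (\<forall>p\<in>{p1..0}. Hu' p > 0)"

end

theory Submission
  imports Defs
begin

lemma deriv_transf:
  assumes "x \<in> s" "\<And>y. y \<in> s \<Longrightarrow> g y = f y" "(f has_real_derivative D) (at x within s)"
  shows "(g has_real_derivative D) (at x within s)"
  using assms unfolding has_field_derivative_def by (rule has_derivative_transform)

lemma smooth_cont: "smooth_real f \<Longrightarrow> continuous_on S f"
proof -
  assume "smooth_real f"
  then obtain D where D: "D 0 = f" "\<And>n x. (D n has_real_derivative D (Suc n) x) (at x)"
    unfolding smooth_real_def by blast
  have "\<And>x. isCont f x" using D(2)[of 0] D(1) DERIV_isCont by metis
  then show ?thesis by (simp add: continuous_at_imp_continuous_on)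
qed

theorem lemma4p2:
  fixes g ell p0 p1 rho_jump :: real
    and \<gamma> \<Gamma> :: "real \<Rightarrow> real"
  assumes "g > 0" and "ell > 0" and "p0 < p1" and "p1 < 0" and "rho_jump < 0"
    and "smooth_real \<gamma>"
    and "\<forall>p\<in>{p1..0}. \<Gamma> p > 0"
    and "\<forall>p\<in>{p1..0}. ((\<lambda>q. (\<Gamma> q)\<^sup>2) has_real_derivative 2 * \<gamma> (-p)) (at p within {p1..0})"
    and "ell = integral {p1..0} (\<lambda>p. 1 / \<Gamma> p)"
  shows "\<forall>lam>0.
    (let H = (\<lambda>p. if p1 \<le> p then integral {p1..p} (\<lambda>r. 1 / \<Gamma> r) + (p1 - p0) / lam
                 else (p - p0) / lam);
         Q = 2 * g * rho_jump * (p1 - p0) / lam + (\<Gamma> p1)\<^sup>2 - lam\<^sup>2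
     in (\<exists>Hl' Hu'. laminar_solution_pos g rho_jump \<gamma> ell p0 p1 Q H Hl' Hu' \<and>
                   (\<forall>p\<in>{p1..0}. 1 / Hu' p = \<Gamma> p)) \<and>
        H p1 = (p1 - p0) / lam \<and>
        ell + H p1 = ell + (p1 - p0) / lam)"
proof (intro allI impI)
  fix lam :: real assume lam: "lam > 0"
  define H where "H = (\<lambda>p. if p1 \<le> p then integral {p1..p} (\<lambda>r. 1 / \<Gamma> r) + (p1 - p0) / lam
                 else (p - p0) / lam)"
  define Q where "Q = 2 * g * rho_jump * (p1 - p0) / lam + (\<Gamma> p1)\<^sup>2 - lam\<^sup>2"
  have Gpos: "\<And>p. p \<in> {p1..0} \<Longrightarrow> \<Gamma> p > 0" using assms(7) by blast
  have S2d: "\<And>p. p \<in> {p1..0} \<Longrightarrow> ((\<lambda>q. (\<Gamma> q)\<^sup>2) has_real_derivative 2 * \<gamma> (-p)) (at p within {p1..0})"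
    using assms(8) by blast
  have S2c: "continuous_on {p1..0} (\<lambda>q. (\<Gamma> q)\<^sup>2)"
    using S2d by (meson DERIV_continuous continuous_on_eq_continuous_within)
  have Geq: "\<And>p. p \<in> {p1..0} \<Longrightarrow> \<Gamma> p = sqrt ((\<Gamma> p)\<^sup>2)"
    using Gpos by (simp add: less_imp_le)
  have Gc: "continuous_on {p1..0} \<Gamma>"
  proof -
    have "continuous_on {p1..0} (\<lambda>q. sqrt ((\<Gamma> q)\<^sup>2))"
      using S2c by (rule continuous_on_real_sqrt)
    then show ?thesis by (rule continuous_on_eq) (metis Geq)
  qed
  have iGc: "continuous_on {p1..0} (\<lambda>r. 1 / \<Gamma> r)"
    proof (rule continuous_on_divide[OF continuous_on_const Gc])
    show "\<forall>r\<in>{p1..0}. \<Gamma> r \<noteq> 0" using Gpos by (simp add: less_imp_neq[symmetric])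
  qed
  have gc: "continuous_on S \<gamma>" for S using smooth_cont[OF assms(6)] .
  define Hu' where "Hu' = (\<lambda>p. 1 / \<Gamma> p)"
  define Hu'' where "Hu'' = (\<lambda>p. - \<gamma> (-p) * (Hu' p) ^ 3)"
  define Hl' where "Hl' = (\<lambda>p::real. 1 / lam)"
  define Hl'' where "Hl'' = (\<lambda>p::real. 0::real)"
  have Hup: "H p = integral {p1..p} (\<lambda>r. 1 / \<Gamma> r) + (p1 - p0) / lam" if "p \<in> {p1..0}" for p
    using that by (simp add: H_def)
  have Hlo: "H p = (p - p0) / lam" if "p \<in> {p0..p1}" for p
    using that by (cases "p = p1") (auto simp: H_def)
  have C2u: "C2_with p1 0 H Hu' Hu''"
    unfolding C2_with_def
  proof (intro conjI ballI)
    fix p assume p: "p \<in> {p1..0}"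
    have "((\<lambda>x. integral {p1..x} (\<lambda>r. 1 / \<Gamma> r) + (p1 - p0) / lam) has_real_derivative 1 / \<Gamma> p + 0)
        (at p within {p1..0})"
      by (intro derivative_intros integral_has_real_derivative[OF iGc p])
    then show "(H has_real_derivative Hu' p) (at p within {p1..0})"
      unfolding Hu'_def by (intro deriv_transf[OF p Hup]) auto
    have gp: "\<Gamma> p > 0" using Gpos p .
    have "((\<lambda>q. inverse (sqrt ((\<Gamma> q)\<^sup>2))) has_real_derivative
       - (inverse (sqrt ((\<Gamma> p)\<^sup>2)) * (inverse (sqrt ((\<Gamma> p)\<^sup>2)) / 2 * (2 * \<gamma> (-p))) * inverse (sqrt ((\<Gamma> p)\<^sup>2))))
        (at p within {p1..0})"
      apply (rule DERIV_inverse')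
       apply (rule DERIV_chain2[OF DERIV_real_sqrt S2d[OF p]])
      using gp by auto
    moreover have "- (inverse (sqrt ((\<Gamma> p)\<^sup>2)) * (inverse (sqrt ((\<Gamma> p)\<^sup>2)) / 2 * (2 * \<gamma> (-p))) * inverse (sqrt ((\<Gamma> p)\<^sup>2))) = Hu'' p"
      using gp by (simp add: Hu''_def Hu'_def power3_eq_cube field_simps)
    ultimately have "((\<lambda>q. inverse (sqrt ((\<Gamma> q)\<^sup>2))) has_real_derivative Hu'' p) (at p within {p1..0})"
      by simp
    then show "(Hu' has_real_derivative Hu'' p) (at p within {p1..0})"
      apply (rule deriv_transf[OF p, rotated])
      using Geq by (simp add: Hu'_def divide_inverse)
  next
    show "continuous_on {p1..0} Hu''"
    proof -
      have a: "continuous_on {p1..0} (\<lambda>p. \<gamma> (-p))"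
        by (rule continuous_on_compose2[OF gc[of UNIV] continuous_on_minus[OF continuous_on_id]]) auto
      have "continuous_on {p1..0} (\<lambda>p. - \<gamma> (-p) * (1 / \<Gamma> p) ^ 3)"
        by (intro continuous_on_mult continuous_on_minus continuous_on_power a iGc)
      then show ?thesis unfolding Hu''_def Hu'_def .
    qed
  qed
  have C2l: "C2_with p0 p1 H Hl' Hl''"
    unfolding C2_with_def
  proof (intro conjI ballI)
    fix p assume p: "p \<in> {p0..p1}"
    have "((\<lambda>x. (x - p0) / lam) has_real_derivative 1 / lam) (at p within {p0..p1})"
      using lam by (auto intro!: derivative_eq_intros)
    then show "(H has_real_derivative Hl' p) (at p within {p0..p1})"
      unfolding Hl'_def by (intro deriv_transf[OF p Hlo]) auto
    show "(Hl' has_real_derivative Hl'' p) (at p within {p0..p1})"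
      unfolding Hl'_def Hl''_def by (intro derivative_intros)
  qed (simp add: Hl''_def)
  have Hc: "continuous_on {p0..0} H"
  proof -
    have c1: "continuous_on {p0..p1} H"
      unfolding continuous_on_eq_continuous_within
    proof
      fix x assume "x \<in> {p0..p1}"
      then show "continuous (at x within {p0..p1}) H"
        using C2l unfolding C2_with_def by (blast intro: DERIV_continuous)
    qed
    have c2: "continuous_on {p1..0} H"
      unfolding continuous_on_eq_continuous_within
    proof
      fix x assume "x \<in> {p1..0}"
      then show "continuous (at x within {p1..0}) H"
        using C2u unfolding C2_with_def by (blast intro: DERIV_continuous)
    qed
    have "{p0..0} = {p0..p1} \<union> {p1..0}" using assms(3,4) by auto
    then show ?thesis using continuous_on_closed_Un[OF _ _ c1 c2] by simp
  qed
  have Hp1: "H p1 = (p1 - p0) / lam" by (simp add: H_def)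
  have H0: "H 0 = ell + H p1" using assms(4,9) by (simp add: H_def Hp1)
  have Hp0: "H p0 = 0" using assms(3) by (simp add: H_def)
  have sol: "laminar_solution_pos g rho_jump \<gamma> ell p0 p1 Q H Hl' Hu'"
    unfolding laminar_solution_pos_def
  proof (intro conjI)
    show "\<exists>Hl'' Hu''. C2_with p0 p1 H Hl' Hl'' \<and> C2_with p1 0 H Hu' Hu'' \<and>
        (\<forall>p\<in>{p0<..<p1}. Hl'' p = 0) \<and> (\<forall>p\<in>{p1<..<0}. Hu'' p = - \<gamma> (-p) * (Hu' p) ^ 3)"
      using C2l C2u by (intro exI[of _ Hl''] exI[of _ Hu'']) (simp add: Hl''_def Hu''_def)
    show "1 / (Hu' p1)\<^sup>2 - 1 / (Hl' p1)\<^sup>2 + 2 * g * rho_jump * H p1 - Q = 0"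
      using lam by (simp add: Hu'_def Hl'_def Q_def Hp1 power_divide)
    show "\<forall>p\<in>{p0..p1}. 0 < Hl' p" using lam by (simp add: Hl'_def)
    show "\<forall>p\<in>{p1..0}. 0 < Hu' p" using Gpos by (simp add: Hu'_def)
  qed (use Hc H0 Hp0 in auto)
  have "\<forall>p\<in>{p1..0}. 1 / Hu' p = \<Gamma> p" by (simp add: Hu'_def)
  with sol Hp1 show "let H = (\<lambda>p. if p1 \<le> p then integral {p1..p} (\<lambda>r. 1 / \<Gamma> r) + (p1 - p0) / lam
                 else (p - p0) / lam);
         Q = 2 * g * rho_jump * (p1 - p0) / lam + (\<Gamma> p1)\<^sup>2 - lam\<^sup>2
     in (\<exists>Hl' Hu'. laminar_solution_pos g rho_jump \<gamma> ell p0 p1 Q H Hl' Hu' \<and>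
                   (\<forall>p\<in>{p1..0}. 1 / Hu' p = \<Gamma> p)) \<and>
        H p1 = (p1 - p0) / lam \<and>
        ell + H p1 = ell + (p1 - p0) / lam"
    unfolding Let_def H_def[symmetric] Q_def[symmetric]
  proof (intro conjI)
    show "\<exists>Hl' Hu'. laminar_solution_pos g rho_jump \<gamma> ell p0 p1 Q H Hl' Hu' \<and>
                   (\<forall>p\<in>{p1..0}. 1 / Hu' p = \<Gamma> p)"
      using sol \<open>\<forall>p\<in>{p1..0}. 1 / Hu' p = \<Gamma> p\<close> by blast
  qed (simp_all add: Hp1)
qed

end
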